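(* Let $n=5$, $x_i=i$ for $i=1,\dots,5$, and $Y_i=\beta_0+\beta_1x_i+\varepsilon_i$ with unknown $\beta_0,\beta_1\in\mathbb{R}$ and $\varepsilon_1,\dots,\varepsilon_5$ i.i.d. with a continuous distribution that is symmetric about $0$. Let $s_1<s_2<\cdots<s_{10}$ be the ten slopes $S_{ij}=(Y_i-Y_j)/(x_i-x_j)$, $i<j$, sorted increasingly. Define $p_2=P(\beta_1\in(s_2,s_{10})\wedge 2s_2\le s_1+s_9\wedge 2s_9<s_2+s_{10})$ and $p_3=P(\beta_1\in(s_1,s_9)\wedge s_1+s_9<2s_2\wedge s_2+s_{10}\le 2s_9)$. Then $p_2=p_3$.
   Context: Ties among the slopes occur with probability zero and are ignored. *)

theory Defs
  imports "HOL-Probability.Probability"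
begin

definition obs :: "real \<Rightarrow> real \<Rightarrow> (nat \<Rightarrow> real) \<Rightarrow> nat \<Rightarrow> real" where
  "obs b0 b1 e i = b0 + b1 * real i + e i"

definition slope :: "(nat \<Rightarrow> real) \<Rightarrow> nat \<Rightarrow> nat \<Rightarrow> real" where
  "slope Y i j = (Y i - Y j) / (real i - real j)"

definition sorted_slopes :: "(nat \<Rightarrow> real) \<Rightarrow> real list" where
  "sorted_slopes Y = sort [slope Y i j. i \<leftarrow> [1..<6], j \<leftarrow> [Suc i..<6]]"

text \<open>k-th smallest slope s_k, 1-indexed (k = 1..10).\<close>
definition os :: "(nat \<Rightarrow> real) \<Rightarrow> nat \<Rightarrow> real" where
  "os Y k = sorted_slopes Y ! (k - 1)"

end

theory Submission imports Defs begin

lemma sort_neg: "sort (map (\<lambda>x. c - x) xs) = map (\<lambda>x. (c::real) - x) (rev (sort xs))"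
proof (rule properties_for_sort)
  show "mset (map (\<lambda>x. c - x) (rev (sort xs))) = mset (map (\<lambda>x. c - x) xs)"
    by simp
  show "sorted (map (\<lambda>x. c - x) (rev (sort xs)))"
    by (simp add: sorted_wrt_map sorted_wrt_rev)
qed

lemma slopes_neg:
  assumes "\<And>i. i \<in> {1..5} \<Longrightarrow> e' i = - e i"
  shows "[slope (obs b0 b1 e') i j. i \<leftarrow> [1..<6], j \<leftarrow> [Suc i..<6]]
       = map (\<lambda>x. 2*b1 - x) [slope (obs b0 b1 e) i j. i \<leftarrow> [1..<6], j \<leftarrow> [Suc i..<6]]"
  using assms by (simp add: upt_rec slope_def obs_def field_simps)

lemma os_neg:
  assumes "\<And>i. i \<in> {1..5} \<Longrightarrow> e' i = - e i" and "1 \<le> k" "k \<le> 10"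
  shows "os (obs b0 b1 e') k = 2*b1 - os (obs b0 b1 e) (11 - k)"
proof -
  have len: "length (sorted_slopes (obs b0 b1 e)) = 10"
    by (simp add: sorted_slopes_def upt_rec)
  have "sorted_slopes (obs b0 b1 e') = map (\<lambda>x. 2*b1 - x) (rev (sorted_slopes (obs b0 b1 e)))"
    unfolding sorted_slopes_def
    apply (subst slopes_neg[where e=e and e'=e'])
     apply (simp add: assms(1))
    by (rule sort_neg)
  then show ?thesis
    unfolding os_def using assms(2,3) len
    by (simp add: rev_nth)
qed

theorem theorem7:
  fixes M :: "real measure" and b0 b1 :: real
  assumes "prob_space M"
    and "sets M = sets borel"
    and "\<And>x. measure M {x} = 0"
    and "distr M borel uminus = M"
  shows "measure (PiM {1..5} (\<lambda>_. M))
           {e \<in> space (PiM {1..5} (\<lambda>_. M)).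
              let s = os (obs b0 b1 e) in
              b1 \<in> {s 2<..<s 10} \<and> 2 * s 2 \<le> s 1 + s 9 \<and> 2 * s 9 < s 2 + s 10}
       = measure (PiM {1..5} (\<lambda>_. M))
           {e \<in> space (PiM {1..5} (\<lambda>_. M)).
              let s = os (obs b0 b1 e) in
              b1 \<in> {s 1<..<s 9} \<and> s 1 + s 9 < 2 * s 2 \<and> s 2 + s 10 \<le> 2 * s 9}"
proof -
  define P where "P = PiM {1..5::nat} (\<lambda>_. M)"
  define \<phi> where "\<phi> = compose {1..5::nat} (uminus :: real \<Rightarrow> real)"
  define C1 where "C1 = (\<lambda>e. let s = os (obs b0 b1 e) in
              b1 \<in> {s 2<..<s 10} \<and> 2 * s 2 \<le> s 1 + s 9 \<and> 2 * s 9 < s 2 + s 10)"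
  define C2 where "C2 = (\<lambda>e. let s = os (obs b0 b1 e) in
              b1 \<in> {s 1<..<s 9} \<and> s 1 + s 9 < 2 * s 2 \<and> s 2 + s 10 \<le> 2 * s 9)"
  define A1 where "A1 = {e \<in> space P. C1 e}"
  define A2 where "A2 = {e \<in> space P. C2 e}"
  have umM: "uminus \<in> M \<rightarrow>\<^sub>M M"
    using measurable_cong_sets[OF assms(2) assms(2)] by simp
  have prodM: "product_prob_space (\<lambda>_::nat. M)"
    using assms(1) by (simp add: product_prob_spaceI)
  have dM: "distr M M uminus = M"
    using assms(4) distr_cong[OF refl assms(2), where f=uminus and g=uminus] by simp
  have D: "distr P P \<phi> = P"
  proof -
    have "distr P P \<phi> = PiM {1..5::nat} (\<lambda>i. distr M M uminus)"
      unfolding P_def \<phi>_def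
      using prodM umM by (intro distr_PiM_finite_prob_space) simp_all
    then show ?thesis unfolding dM P_def .
  qed
  have mphi: "\<phi> \<in> P \<rightarrow>\<^sub>M P"
    unfolding P_def \<phi>_def compose_def
  proof (rule measurable_restrict)
    fix i :: nat assume "i \<in> {1..5}"
    show "(\<lambda>x. - x i) \<in> PiM {1..5::nat} (\<lambda>_. M) \<rightarrow>\<^sub>M M"
      using measurable_compose[OF measurable_component_singleton[OF \<open>i \<in> {1..5}\<close>, of "\<lambda>_. M"] umM] by simp
  qed
  have sp: "e \<in> space P \<Longrightarrow> \<phi> e \<in> space P" for e
    using mphi by (rule measurable_space)
  have inv: "e \<in> space P \<Longrightarrow> \<phi> (\<phi> e) = e" for e
    unfolding \<phi>_def P_def by (auto simp: space_PiM compose_def PiE_def extensional_def)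
  have key: "e \<in> space P \<Longrightarrow> C1 (\<phi> e) \<longleftrightarrow> C2 e" for e
  proof -
    have h: "\<And>i. i \<in> {1..5} \<Longrightarrow> \<phi> e i = - e i" by (simp add: \<phi>_def compose_def)
    have "os (obs b0 b1 (\<phi> e)) k = 2*b1 - os (obs b0 b1 e) (11 - k)" if "k \<in> {1,2,9,10}" for k
      using os_neg[OF h, where k=k] that by auto
    then have q: "os (obs b0 b1 (\<phi> e)) 1 = 2*b1 - os (obs b0 b1 e) 10"
      "os (obs b0 b1 (\<phi> e)) 2 = 2*b1 - os (obs b0 b1 e) 9"
      "os (obs b0 b1 (\<phi> e)) 9 = 2*b1 - os (obs b0 b1 e) 2"
      "os (obs b0 b1 (\<phi> e)) 10 = 2*b1 - os (obs b0 b1 e) 1" by auto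
    show ?thesis unfolding C1_def C2_def Let_def q by auto
  qed
  have E2: "A2 = \<phi> -` A1 \<inter> space P"
    unfolding A1_def A2_def using key sp by auto
  have E1: "A1 = \<phi> -` A2 \<inter> space P"
  proof -
    have "C1 e \<longleftrightarrow> C2 (\<phi> e)" if "e \<in> space P" for e
      using key[OF sp[OF that]] inv[OF that] by simp
    then show ?thesis unfolding A1_def A2_def using sp by auto
  qed
  have "measure P A1 = measure P A2"
  proof (cases "A1 \<in> sets P")
    case True
    then show ?thesis using measure_distr[OF mphi True] D E2 by simp
  next
    case False
    have "A2 \<notin> sets P"
      using False E1 mphi measurable_sets by metis
    then show ?thesis using False measure_notin_sets by metis
  qed
  then show ?thesis unfolding A1_def A2_def C1_def C2_def P_def .
qed

end
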